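(* Let $G$ be a plane graph containing no $3$-cycle, $4$-cycle and $5$-cycle that are pairwise adjacent, with a $3$-cycle $C_0$, $s\ge1$, a cover $H$ of $G$ with respect to $L(v)=\{1,\dots,s\}$ for all $v$, $F=(f_1,\dots,f_s)$ with $f_i(v)\in\{0,1,2\}$ and $f_1(v)+\cdots+f_s(v)\ge4$ for all $v$, and a DP-$F$-coloring $R_0$ of $C_0$ (with respect to the restriction of $H$) that cannot be extended to a DP-$F$-coloring of $(G,H)$; suppose $|V(G)|$ is minimum among all such counterexamples. Then $G$ has no separating $3$-cycles.
   Context: Two cycles are adjacent if they share an edge. A cycle $C$ of a plane graph is separating if there are vertices of $G$ both inside and outside $C$. A cover $H$ of $G$ w.r.t. $L$ has vertex set $\{(u,c):c\in L(u)\}$, each $\{u\}\times L(u)$ is a clique, for each edge $uv$ the edges between $\{u\}\times L(u)$ and $\{v\}\times L(v)$ form a matching, and there are no such edges for non-adjacent $u,v$. A representative set contains exactly one vertex of each $\{v\}\times L(v)$. A DP-$F$-coloring is a representative set $R$ admitting an ordering in which each $(v,i)\in R$ has fewer than $f_i(v)$ $H$-neighbors among earlier elements of $R$; extending $R_0$ means finding a DP-$F$-coloring of $(G,H)$ containing $R_0$. *)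

theory Defs
  imports "HOL-Analysis.Analysis"
begin

text \<open>Plane graphs: vertices are points of the plane (type complex); every edge
  e = {u,v} (a 2-element set of vertices) is drawn as an arc \<gamma> e from u to v
  (or from v to u); an arc meets V only in its endpoints and two distinct arcs
  meet only in common endpoints.\<close>

definition plane_graph ::
  "complex set \<Rightarrow> complex set set \<Rightarrow> (complex set \<Rightarrow> real \<Rightarrow> complex) \<Rightarrow> bool" where
  "plane_graph V E \<gamma> \<longleftrightarrow>
     finite V \<and>
     (\<forall>e\<in>E. \<exists>u v. e = {u, v} \<and> u \<noteq> v \<and> u \<in> V \<and> v \<in> V \<and> arc (\<gamma> e) \<and>
        ((pathstart (\<gamma> e) = u \<and> pathfinish (\<gamma> e) = v) \<or>
         (pathstart (\<gamma> e) = v \<and> pathfinish (\<gamma> e) = u)) \<and>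
        path_image (\<gamma> e) \<inter> V = {u, v}) \<and>
     (\<forall>e\<in>E. \<forall>e'\<in>E. e \<noteq> e' \<longrightarrow> path_image (\<gamma> e) \<inter> path_image (\<gamma> e') \<subseteq> e \<inter> e')"

definition cycle_edges :: "'a list \<Rightarrow> 'a set set" where
  "cycle_edges C = {{C ! i, C ! ((i + 1) mod length C)} | i. i < length C}"

definition is_cycle :: "'a set \<Rightarrow> 'a set set \<Rightarrow> 'a list \<Rightarrow> bool" where
  "is_cycle V E C \<longleftrightarrow> length C \<ge> 3 \<and> distinct C \<and> set C \<subseteq> V \<and> cycle_edges C \<subseteq> E"

definition adjacent_cycles :: "'a list \<Rightarrow> 'a list \<Rightarrow> bool" where
  "adjacent_cycles C D \<longleftrightarrow> cycle_edges C \<inter> cycle_edges D \<noteq> {}"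

definition no_adjacent_345 :: "'a set \<Rightarrow> 'a set set \<Rightarrow> bool" where
  "no_adjacent_345 V E \<longleftrightarrow>
     \<not> (\<exists>C3 C4 C5. is_cycle V E C3 \<and> length C3 = 3 \<and> is_cycle V E C4 \<and> length C4 = 4 \<and>
          is_cycle V E C5 \<and> length C5 = 5 \<and>
          adjacent_cycles C3 C4 \<and> adjacent_cycles C3 C5 \<and> adjacent_cycles C4 C5)"

definition cycle_curve :: "(complex set \<Rightarrow> real \<Rightarrow> complex) \<Rightarrow> complex list \<Rightarrow> complex set" where
  "cycle_curve \<gamma> C = (\<Union>e\<in>cycle_edges C. path_image (\<gamma> e))"

definition separating_cycle ::
  "complex set \<Rightarrow> (complex set \<Rightarrow> real \<Rightarrow> complex) \<Rightarrow> complex list \<Rightarrow> bool" where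
  "separating_cycle V \<gamma> C \<longleftrightarrow>
     V \<inter> inside (cycle_curve \<gamma> C) \<noteq> {} \<and> V \<inter> outside (cycle_curve \<gamma> C) \<noteq> {}"

text \<open>Covers (DP-colouring): H is a simple graph (symmetric irreflexive relation)
  on vertex set {(u,c). c \<in> L u}.\<close>

definition is_cover ::
  "'a set \<Rightarrow> 'a set set \<Rightarrow> ('a \<Rightarrow> 'c set) \<Rightarrow> ('a \<times> 'c \<Rightarrow> 'a \<times> 'c \<Rightarrow> bool) \<Rightarrow> bool" where
  "is_cover V E L H \<longleftrightarrow>
     (\<forall>x y. H x y \<longrightarrow> x \<in> Sigma V L \<and> y \<in> Sigma V L) \<and>
     (\<forall>x y. H x y \<longrightarrow> H y x) \<and>
     (\<forall>x. \<not> H x x) \<and>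
     (\<forall>u\<in>V. \<forall>c\<in>L u. \<forall>c'\<in>L u. c \<noteq> c' \<longrightarrow> H (u, c) (u, c')) \<and>
     (\<forall>u\<in>V. \<forall>v\<in>V. u \<noteq> v \<longrightarrow>
        (if {u, v} \<in> E then
           (\<forall>c\<in>L u. \<forall>d\<in>L v. \<forall>d'\<in>L v. H (u, c) (v, d) \<and> H (u, c) (v, d') \<longrightarrow> d = d') \<and>
           (\<forall>c\<in>L u. \<forall>c'\<in>L u. \<forall>d\<in>L v. H (u, c) (v, d) \<and> H (u, c') (v, d) \<longrightarrow> c = c')
         else (\<forall>c\<in>L u. \<forall>d\<in>L v. \<not> H (u, c) (v, d))))"

definition representative_set :: "'a set \<Rightarrow> ('a \<Rightarrow> 'c set) \<Rightarrow> ('a \<times> 'c) set \<Rightarrow> bool" where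
  "representative_set W L R \<longleftrightarrow> R \<subseteq> Sigma W L \<and> (\<forall>v\<in>W. \<exists>!c. (v, c) \<in> R)"

text \<open>DP-F-colouring of the vertex set W (w.r.t. H restricted to W); F is given as
  f i v = f_i(v).\<close>

definition dp_F_coloring ::
  "'a set \<Rightarrow> ('a \<Rightarrow> 'c set) \<Rightarrow> ('a \<times> 'c \<Rightarrow> 'a \<times> 'c \<Rightarrow> bool) \<Rightarrow> ('c \<Rightarrow> 'a \<Rightarrow> nat)
     \<Rightarrow> ('a \<times> 'c) set \<Rightarrow> bool" where
  "dp_F_coloring W L H f R \<longleftrightarrow> representative_set W L R \<and>
     (\<exists>xs. distinct xs \<and> set xs = R \<and>
        (\<forall>j < length xs. card {k. k < j \<and> H (xs ! k) (xs ! j)} < f (snd (xs ! j)) (fst (xs ! j))))"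

definition counterexample ::
  "complex set \<Rightarrow> complex set set \<Rightarrow> (complex set \<Rightarrow> real \<Rightarrow> complex) \<Rightarrow> complex list \<Rightarrow> nat
    \<Rightarrow> (complex \<times> nat \<Rightarrow> complex \<times> nat \<Rightarrow> bool) \<Rightarrow> (nat \<Rightarrow> complex \<Rightarrow> nat)
    \<Rightarrow> (complex \<times> nat) set \<Rightarrow> bool" where
  "counterexample V E \<gamma> C0 s H f R0 \<longleftrightarrow>
     plane_graph V E \<gamma> \<and> no_adjacent_345 V E \<and>
     is_cycle V E C0 \<and> length C0 = 3 \<and>
     s \<ge> 1 \<and> is_cover V E (\<lambda>_. {1..s}) H \<and>
     (\<forall>v\<in>V. \<forall>i\<in>{1..s}. f i v \<in> {0, 1, 2}) \<and>
     (\<forall>v\<in>V. (\<Sum>i = 1..s. f i v) \<ge> 4) \<and>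
     dp_F_coloring (set C0) (\<lambda>_. {1..s}) H f R0 \<and>
     \<not> (\<exists>R. dp_F_coloring V (\<lambda>_. {1..s}) H f R \<and> R0 \<subseteq> R)"

end

theory Submission
  imports Defs
begin

definition good :: "('x \<Rightarrow> 'x \<Rightarrow> bool) \<Rightarrow> ('x \<Rightarrow> nat) \<Rightarrow> 'x list \<Rightarrow> bool" where
  "good H w xs \<longleftrightarrow> (\<forall>ys x zs. xs = ys @ x # zs \<longrightarrow> card {y \<in> set ys. H y x} < w x)"

lemma card_idx_eq:
  assumes "distinct xs" "j < length xs"
  shows "card {k. k < j \<and> H (xs ! k) (xs ! j)} = card {y \<in> set (take j xs). H y (xs ! j)}"
proof -
  have "{y \<in> set (take j xs). H y (xs ! j)} = (!) xs ` {k. k < j \<and> H (xs ! k) (xs ! j)}"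
  proof -
    have "set (take j xs) = (!) xs ` {0..<j}" using nth_image[of j xs] assms by simp
    then show ?thesis by auto
  qed
  moreover have "inj_on ((!) xs) {k. k < j \<and> H (xs ! k) (xs ! j)}"
    using inj_on_nth[OF assms(1)] assms(2) by auto
  ultimately show ?thesis by (simp add: card_image)
qed

lemma good_iff:
  assumes "distinct xs"
  shows "(\<forall>j < length xs. card {k. k < j \<and> H (xs ! k) (xs ! j)} < w (xs ! j)) \<longleftrightarrow> good H w xs"
proof
  assume L: "\<forall>j < length xs. card {k. k < j \<and> H (xs ! k) (xs ! j)} < w (xs ! j)"
  show "good H w xs" unfolding good_def
  proof (intro allI impI)
    fix ys x zs assume d: "xs = ys @ x # zs"
    let ?j = "length ys"
    have j: "?j < length xs" "xs ! ?j = x" "take ?j xs = ys" using d by auto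
    show "card {y \<in> set ys. H y x} < w x"
      using L[rule_format, OF j(1)] card_idx_eq[OF assms j(1), of H] j by simp
  qed
next
  assume G: "good H w xs"
  show "\<forall>j < length xs. card {k. k < j \<and> H (xs ! k) (xs ! j)} < w (xs ! j)"
  proof (intro allI impI)
    fix j assume j: "j < length xs"
    have "xs = take j xs @ xs ! j # drop (Suc j) xs" using j by (simp add: id_take_nth_drop)
    then have "card {y \<in> set (take j xs). H y (xs ! j)} < w (xs ! j)" using G unfolding good_def by blast
    then show "card {k. k < j \<and> H (xs ! k) (xs ! j)} < w (xs ! j)"
      using card_idx_eq[OF assms j, of H] by simp
  qed
qed

lemma dp_alt:
  "dp_F_coloring W L H f R \<longleftrightarrow> representative_set W L R \<and>
     (\<exists>xs. distinct xs \<and> set xs = R \<and> good H (\<lambda>x. f (snd x) (fst x)) xs)"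
proof -
  have "\<And>xs. distinct xs \<Longrightarrow> (\<forall>j < length xs. card {k. k < j \<and> H (xs ! k) (xs ! j)} < f (snd (xs ! j)) (fst (xs ! j)))
     \<longleftrightarrow> good H (\<lambda>x. f (snd x) (fst x)) xs"
    using good_iff[where w="\<lambda>x. f (snd x) (fst x)"] by simp
  then show ?thesis unfolding dp_F_coloring_def by blast
qed

lemma filter_split:
  "filter P xs = ws @ x # vs \<Longrightarrow> \<exists>ys zs. xs = ys @ x # zs \<and> filter P ys = ws"
proof (induction xs arbitrary: ws)
  case Nil then show ?case by simp
next
  case (Cons a xs)
  show ?case
  proof (cases "P a")
    case True
    show ?thesis
    proof (cases ws)
      case Nil
      then have "a = x" using Cons.prems True by simp
      then show ?thesis using Nil True by (intro exI[of _ "[]"] exI[of _ xs]) auto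
    next
      case (Cons b ws')
      then have "filter P xs = ws' @ x # vs" "b = a" using Cons.prems True by auto
      then obtain ys zs where "xs = ys @ x # zs" "filter P ys = ws'" using Cons.IH by blast
      then show ?thesis using \<open>b = a\<close> Cons True by (intro exI[of _ "a # ys"] exI[of _ zs]) auto
    qed
  next
    case False
    then have "filter P xs = ws @ x # vs" using Cons.prems by simp
    then obtain ys zs where "xs = ys @ x # zs" "filter P ys = ws" using Cons.IH by blast
    then show ?thesis using False by (intro exI[of _ "a # ys"] exI[of _ zs]) auto
  qed
qed

definition bef :: "'x list \<Rightarrow> 'x \<Rightarrow> 'x \<Rightarrow> bool" where
  "bef xs p q \<longleftrightarrow> (\<exists>ys zs. xs = ys @ q # zs \<and> p \<in> set ys)"

lemma split_uniq: "distinct (ys @ q # zs) \<Longrightarrow> ys @ q # zs = ys' @ q # zs' \<Longrightarrow> ys = ys'"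
proof (induction ys arbitrary: ys')
  case Nil then show ?case by (cases ys') auto
next
  case (Cons a ys)
  show ?case
  proof (cases ys')
    case Nil then show ?thesis using Cons.prems by auto
  next
    case (Cons b l)
    then have "a = b" "ys @ q # zs = l @ q # zs'" using Cons.prems by auto
    moreover have "distinct (ys @ q # zs)" using Cons.prems by simp
    ultimately show ?thesis using Cons.IH[of l] Cons by simp
  qed
qed

lemma bef_unique:
  assumes "distinct xs" "xs = ys @ q # zs"
  shows "bef xs p q \<longleftrightarrow> p \<in> set ys"
proof
  assume "bef xs p q"
  then obtain ys' zs' where d: "xs = ys' @ q # zs'" "p \<in> set ys'" unfolding bef_def by blast
  have "ys' = ys" using d(1) assms split_uniq by metis
  then show "p \<in> set ys" using d by simp
next
  assume "p \<in> set ys" then show "bef xs p q" using assms unfolding bef_def by blast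
qed

lemma bef_total:
  assumes "distinct xs" "p \<in> set xs" "q \<in> set xs" "p \<noteq> q"
  shows "bef xs p q \<or> bef xs q p"
proof -
  obtain ys zs where d: "xs = ys @ q # zs" using assms(3) by (meson split_list)
  then have "p \<in> set ys \<or> p \<in> set zs" using assms by auto
  then show ?thesis
  proof
    assume "p \<in> set ys" then show ?thesis using d unfolding bef_def by blast
  next
    assume "p \<in> set zs"
    then obtain us vs where "zs = us @ p # vs" by (meson split_list)
    then have "xs = (ys @ q # us) @ p # vs" using d by simp
    then have "bef xs q p" unfolding bef_def by (intro exI[of _ "ys @ q # us"] exI[of _ vs]) simp
    then show ?thesis by blast
  qed
qed

lemma bef_card:
  assumes "distinct xs" "good H w xs" "q \<in> set xs"
  shows "card {p. bef xs p q \<and> H p q} < w q"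
proof -
  obtain ys zs where d: "xs = ys @ q # zs" using assms(3) by (meson split_list)
  have "{p. bef xs p q \<and> H p q} = {y \<in> set ys. H y q}" using bef_unique[OF assms(1) d] by auto
  then show ?thesis using assms(2) d unfolding good_def by auto
qed

lemma bef_set_finite: "finite {p. bef xs p q \<and> H p q}"
  by (rule finite_subset[of _ "set xs"]) (auto simp: bef_def)

lemma force:
  assumes dist: "distinct xs" and g: "good H w xs"
    and mem: "p1 \<in> set xs" "p2 \<in> set xs" "p3 \<in> set xs" "x \<in> set xs"
    and ne: "p1 \<noteq> p2" "p1 \<noteq> p3" "p2 \<noteq> p3" "x \<noteq> p1" "x \<noteq> p2" "x \<noteq> p3"
    and h: "H p1 p2" "H p2 p3" and h': "H p2 p1" "H p3 p2"
    and w: "w p1 \<le> 1" "w p2 \<le> 2" "w p3 \<le> 2"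
    and y: "y \<in> {p1, p2, p3}" "H x y"
    and d: "xs = ys @ x # zs"
  shows "y \<in> set ys"
proof -
  have c1: "card {p. bef xs p p1 \<and> H p p1} < w p1" using bef_card[OF dist g mem(1)] .
  have c2: "card {p. bef xs p p2 \<and> H p p2} < w p2" using bef_card[OF dist g mem(2)] .
  have c3: "card {p. bef xs p p3 \<and> H p p3} < w p3" using bef_card[OF dist g mem(3)] .
  have "card {p. bef xs p p1 \<and> H p p1} = 0" using c1 w(1) by simp
  then have e1: "\<And>p. \<not> (bef xs p p1 \<and> H p p1)" using bef_set_finite[of xs p1 H] by simp
  have b12: "bef xs p1 p2" using bef_total[OF dist mem(1,2) ne(1)] e1 h'(1) by blast
  have o2: "\<And>p. bef xs p p2 \<Longrightarrow> H p p2 \<Longrightarrow> p = p1"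
  proof (rule ccontr)
    fix p assume a: "bef xs p p2" "H p p2" "p \<noteq> p1"
    have "{p, p1} \<subseteq> {p. bef xs p p2 \<and> H p p2}" using a b12 h(1) by auto
    then have "card {p, p1} \<le> card {p. bef xs p p2 \<and> H p p2}"
      using bef_set_finite card_mono by metis
    then show False using c2 w(2) a(3) by simp
  qed
  have b23: "bef xs p2 p3"
    using bef_total[OF dist mem(2,3) ne(3)] o2[of p3] ne(2) h'(2) by blast
  have o3: "\<And>p. bef xs p p3 \<Longrightarrow> H p p3 \<Longrightarrow> p = p2"
  proof (rule ccontr)
    fix p assume a: "bef xs p p3" "H p p3" "p \<noteq> p2"
    have "{p, p2} \<subseteq> {p. bef xs p p3 \<and> H p p3}" using a b23 h(2) by auto
    then have "card {p, p2} \<le> card {p. bef xs p p3 \<and> H p p3}"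
      using bef_set_finite card_mono by metis
    then show False using c3 w(3) a(3) by simp
  qed
  have ymem: "y \<in> set xs" "y \<noteq> x" using y(1) mem ne by auto
  have "\<not> bef xs x y" using y e1 o2 o3 ne by auto
  then have "bef xs y x" using bef_total[OF dist ymem(1) mem(4) ymem(2)] by blast
  then show ?thesis using bef_unique[OF dist d] by simp
qed

lemma cycle_edges3: "cycle_edges [x, y, z] = {{x, y}, {y, z}, {z, x}}"
proof (intro equalityI subsetI)
  fix e assume "e \<in> cycle_edges [x, y, z]"
  then obtain i where i: "i < length [x,y,z]" "e = {[x,y,z] ! i, [x,y,z] ! ((i + 1) mod length [x,y,z])}"
    unfolding cycle_edges_def by blast
  then have "i < 3" by simp
  then have "i = 0 \<or> i = 1 \<or> i = 2" by auto
  then show "e \<in> {{x, y}, {y, z}, {z, x}}" using i(2) by auto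
next
  fix e assume "e \<in> {{x, y}, {y, z}, {z, x}}"
  then have "e = {[x,y,z] ! 0, [x,y,z] ! ((0 + 1) mod 3)} \<or> e = {[x,y,z] ! 1, [x,y,z] ! ((1 + 1) mod 3)}
     \<or> e = {[x,y,z] ! 2, [x,y,z] ! ((2 + 1) mod 3)}" by auto
  then show "e \<in> cycle_edges [x, y, z]"
  proof -
    have l: "length [x,y,z] = 3" by simp
    have "\<exists>i<length [x,y,z]. e = {[x,y,z] ! i, [x,y,z] ! ((i + 1) mod length [x,y,z])}"
      unfolding l using \<open>e = _ \<or> _\<close> by (metis zero_less_numeral one_less_numeral_iff semiring_norm(77) numeral_2_eq_2 numeral_3_eq_3 lessI less_SucI)
    then show ?thesis unfolding cycle_edges_def by blast
  qed
qed

lemma cycle_edge_sub: "e \<in> cycle_edges C \<Longrightarrow> e \<subseteq> set C"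
  unfolding cycle_edges_def by (auto intro!: nth_mem mod_less_divisor)

lemma tri_adj:
  assumes "is_cycle V E C" "length C = 3" "u \<in> set C" "v \<in> set C" "u \<noteq> v"
  shows "{u, v} \<in> E"
proof -
  have "\<exists>x y z. C = [x, y, z]" using assms(2) by (auto simp: numeral_3_eq_3 length_Suc_conv)
  then obtain x y z where C: "C = [x, y, z]" by blast
  have "cycle_edges C \<subseteq> E" using assms(1) unfolding is_cycle_def by simp
  then show ?thesis using assms(3-5) unfolding C cycle_edges3 by (auto simp: insert_commute)
qed

lemma cycle_mono: "is_cycle V' E' C \<Longrightarrow> V' \<subseteq> V \<Longrightarrow> E' \<subseteq> E \<Longrightarrow> is_cycle V E C"
  unfolding is_cycle_def by auto

lemma cycle_sub: "is_cycle V E C \<Longrightarrow> set C \<subseteq> V' \<Longrightarrow> is_cycle V' {e \<in> E. e \<subseteq> V'} C"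
  unfolding is_cycle_def using cycle_edge_sub by fastforce

lemma no345_sub: "no_adjacent_345 V E \<Longrightarrow> V' \<subseteq> V \<Longrightarrow> no_adjacent_345 V' {e \<in> E. e \<subseteq> V'}"
proof -
  assume a: "no_adjacent_345 V E" "V' \<subseteq> V"
  have m: "\<And>C. is_cycle V' {e \<in> E. e \<subseteq> V'} C \<Longrightarrow> is_cycle V E C"
    using cycle_mono a(2) by blast
  show ?thesis using a(1) unfolding no_adjacent_345_def using m by meson
qed

lemma plane_sub:
  assumes "plane_graph V E \<gamma>" "V' \<subseteq> V"
  shows "plane_graph V' {e \<in> E. e \<subseteq> V'} \<gamma>"
proof -
  obtain F: "finite V" and P1: "\<forall>e\<in>E. \<exists>u v. e = {u, v} \<and> u \<noteq> v \<and> u \<in> V \<and> v \<in> V \<and> arc (\<gamma> e) \<and>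
        ((pathstart (\<gamma> e) = u \<and> pathfinish (\<gamma> e) = v) \<or>
         (pathstart (\<gamma> e) = v \<and> pathfinish (\<gamma> e) = u)) \<and>
        path_image (\<gamma> e) \<inter> V = {u, v}"
   and P2: "\<forall>e\<in>E. \<forall>e'\<in>E. e \<noteq> e' \<longrightarrow> path_image (\<gamma> e) \<inter> path_image (\<gamma> e') \<subseteq> e \<inter> e'"
    using assms(1) unfolding plane_graph_def by blast
  have Q1: "\<forall>e\<in>{e \<in> E. e \<subseteq> V'}. \<exists>u v. e = {u, v} \<and> u \<noteq> v \<and> u \<in> V' \<and> v \<in> V' \<and> arc (\<gamma> e) \<and>
        ((pathstart (\<gamma> e) = u \<and> pathfinish (\<gamma> e) = v) \<or>
         (pathstart (\<gamma> e) = v \<and> pathfinish (\<gamma> e) = u)) \<and>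
        path_image (\<gamma> e) \<inter> V' = {u, v}"
  proof
    fix e assume e: "e \<in> {e \<in> E. e \<subseteq> V'}"
    then have eE: "e \<in> E" by simp
    obtain u v where uv: "e = {u, v}" "u \<noteq> v" "u \<in> V" "v \<in> V" "arc (\<gamma> e)"
      "((pathstart (\<gamma> e) = u \<and> pathfinish (\<gamma> e) = v) \<or>
         (pathstart (\<gamma> e) = v \<and> pathfinish (\<gamma> e) = u))"
      "path_image (\<gamma> e) \<inter> V = {u, v}"
      using P1[rule_format, OF eE] by (elim exE conjE) 
    have uv': "u \<in> V'" "v \<in> V'" using e uv(1) by auto
    have "path_image (\<gamma> e) \<inter> V' = {u, v}" using uv(7) uv' assms(2) by auto
    then show "\<exists>u v. e = {u, v} \<and> u \<noteq> v \<and> u \<in> V' \<and> v \<in> V' \<and> arc (\<gamma> e) \<and>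
        ((pathstart (\<gamma> e) = u \<and> pathfinish (\<gamma> e) = v) \<or>
         (pathstart (\<gamma> e) = v \<and> pathfinish (\<gamma> e) = u)) \<and>
        path_image (\<gamma> e) \<inter> V' = {u, v}"
      using uv uv' by (intro exI[of _ u] exI[of _ v]) simp
  qed
  have Q2: "\<forall>e\<in>{e \<in> E. e \<subseteq> V'}. \<forall>e'\<in>{e \<in> E. e \<subseteq> V'}. e \<noteq> e' \<longrightarrow> path_image (\<gamma> e) \<inter> path_image (\<gamma> e') \<subseteq> e \<inter> e'"
    using P2 by simp
  have "finite V'" using F assms(2) finite_subset by blast
  then show ?thesis unfolding plane_graph_def using Q1 Q2 by (intro conjI)
qed

lemma cover_sub:
  assumes "is_cover V E L H" "V' \<subseteq> V"
  shows "is_cover V' {e \<in> E. e \<subseteq> V'} L (\<lambda>x y. H x y \<and> fst x \<in> V' \<and> fst y \<in> V')"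
proof -
  note c = assms(1)[unfolded is_cover_def]
  note c1 = c[THEN conjunct1] and c2 = c[THEN conjunct2, THEN conjunct1]
    and c3 = c[THEN conjunct2, THEN conjunct2, THEN conjunct1]
    and c4 = c[THEN conjunct2, THEN conjunct2, THEN conjunct2, THEN conjunct1]
    and c5 = c[THEN conjunct2, THEN conjunct2, THEN conjunct2, THEN conjunct2]
  let ?H = "\<lambda>x y. H x y \<and> fst x \<in> V' \<and> fst y \<in> V'"
  let ?E = "{e \<in> E. e \<subseteq> V'}"
  have d1: "\<forall>x y. ?H x y \<longrightarrow> x \<in> Sigma V' L \<and> y \<in> Sigma V' L"
  proof (intro allI impI)
    fix x y assume h: "?H x y"
    then have "x \<in> Sigma V L" "y \<in> Sigma V L" using c1 by blast+
    then show "x \<in> Sigma V' L \<and> y \<in> Sigma V' L" using h by (cases x, cases y) auto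
  qed
  have d2: "\<forall>x y. ?H x y \<longrightarrow> ?H y x" using c2 by blast
  have d3: "\<forall>x. \<not> ?H x x" using c3 by blast
  have d4: "\<forall>u\<in>V'. \<forall>c\<in>L u. \<forall>c'\<in>L u. c \<noteq> c' \<longrightarrow> ?H (u, c) (u, c')" using c4 assms(2) by auto
  have d5: "\<forall>u\<in>V'. \<forall>v\<in>V'. u \<noteq> v \<longrightarrow>
        (if {u, v} \<in> ?E then
           (\<forall>c\<in>L u. \<forall>d\<in>L v. \<forall>d'\<in>L v. ?H (u, c) (v, d) \<and> ?H (u, c) (v, d') \<longrightarrow> d = d') \<and>
           (\<forall>c\<in>L u. \<forall>c'\<in>L u. \<forall>d\<in>L v. ?H (u, c) (v, d) \<and> ?H (u, c') (v, d) \<longrightarrow> c = c')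
         else (\<forall>c\<in>L u. \<forall>d\<in>L v. \<not> ?H (u, c) (v, d)))"
  proof (intro ballI impI)
    fix u v assume uv: "u \<in> V'" "v \<in> V'" "u \<noteq> v"
    then have uvV: "u \<in> V" "v \<in> V" using assms(2) by auto
    have eq: "({u, v} \<in> ?E) = ({u, v} \<in> E)" using uv by auto
    show "if {u, v} \<in> ?E then
           (\<forall>c\<in>L u. \<forall>d\<in>L v. \<forall>d'\<in>L v. ?H (u, c) (v, d) \<and> ?H (u, c) (v, d') \<longrightarrow> d = d') \<and>
           (\<forall>c\<in>L u. \<forall>c'\<in>L u. \<forall>d\<in>L v. ?H (u, c) (v, d) \<and> ?H (u, c') (v, d) \<longrightarrow> c = c')
         else (\<forall>c\<in>L u. \<forall>d\<in>L v. \<not> ?H (u, c) (v, d))"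
    proof (cases "{u, v} \<in> E")
      case True
      then show ?thesis using c5[rule_format, OF uvV uv(3)] eq by simp
    next
      case False
      then show ?thesis using c5[rule_format, OF uvV uv(3)] eq by simp
    qed
  qed
  show ?thesis unfolding is_cover_def using d1 d2 d3 d4 d5 by (intro conjI)
qed

lemma plane_edge:
  assumes "plane_graph V E \<gamma>" "e \<in> E"
  shows "path_image (\<gamma> e) \<inter> V = e" "e \<subseteq> V" "connected (path_image (\<gamma> e))"
  using assms unfolding plane_graph_def
  by (auto intro!: connected_path_image arc_imp_path)

lemma curve_vertices:
  assumes "plane_graph V E \<gamma>" "is_cycle V E C" "v \<in> V"
  shows "v \<in> cycle_curve \<gamma> C \<longleftrightarrow> v \<in> set C"
proof
  assume "v \<in> cycle_curve \<gamma> C"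
  then obtain e where e: "e \<in> cycle_edges C" "v \<in> path_image (\<gamma> e)" unfolding cycle_curve_def by blast
  have "e \<in> E" using e(1) assms(2) unfolding is_cycle_def by blast
  then have "v \<in> e" using plane_edge(1)[OF assms(1)] e(2) assms(3) by blast
  then show "v \<in> set C" using cycle_edge_sub e(1) by blast
next
  assume "v \<in> set C"
  then obtain i where i: "i < length C" "C ! i = v" by (meson in_set_conv_nth)
  let ?e = "{C ! i, C ! ((i + 1) mod length C)}"
  have e: "?e \<in> cycle_edges C" using i unfolding cycle_edges_def by blast
  then have "?e \<in> E" using assms(2) unfolding is_cycle_def by blast
  then have "v \<in> path_image (\<gamma> ?e)" using plane_edge(1)[OF assms(1)] i by blast
  then show "v \<in> cycle_curve \<gamma> C" using e unfolding cycle_curve_def by blast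
qed

lemma plane_cross:
  assumes "plane_graph V E \<gamma>" "e \<in> E" "e' \<in> E" "e \<noteq> e'"
  shows "path_image (\<gamma> e) \<inter> path_image (\<gamma> e') \<subseteq> e \<inter> e'"
proof -
  note c = assms(1)[unfolded plane_graph_def, THEN conjunct2, THEN conjunct2]
  show ?thesis using c[rule_format, OF assms(2,3,4)] .
qed

lemma no_cross:
  assumes pg: "plane_graph V E \<gamma>" and C: "is_cycle V E C" and e: "{u, w} \<in> E"
    and u: "u \<in> inside (cycle_curve \<gamma> C)" and w: "w \<in> outside (cycle_curve \<gamma> C)"
  shows False
proof -
  let ?K = "cycle_curve \<gamma> C" and ?e = "{u, w}"
  have uV: "u \<in> V" "w \<in> V" using plane_edge(2)[OF pg e] by auto
  have uK: "u \<notin> ?K" "w \<notin> ?K" using u w inside_Un_outside[of ?K] by blast+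
  then have uC: "u \<notin> set C" "w \<notin> set C" using curve_vertices[OF pg C] uV by auto
  have disj: "path_image (\<gamma> ?e) \<inter> ?K = {}"
  proof (rule ccontr)
    assume "path_image (\<gamma> ?e) \<inter> ?K \<noteq> {}"
    then obtain z e' where z: "z \<in> path_image (\<gamma> ?e)" "e' \<in> cycle_edges C" "z \<in> path_image (\<gamma> e')"
      unfolding cycle_curve_def by blast
    have e'E: "e' \<in> E" using z(2) C unfolding is_cycle_def by blast
    have "e' \<noteq> ?e" using cycle_edge_sub[OF z(2)] uC by auto
    then have "z \<in> ?e \<inter> e'" using plane_cross[OF pg e e'E] z by blast
    then show False using cycle_edge_sub[OF z(2)] uC by auto
  qed
  have "connected_component (- ?K) w u"
    unfolding connected_component_def
    using plane_edge(3)[OF pg e] disj plane_edge(1)[OF pg e]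
    by (intro exI[of _ "path_image (\<gamma> ?e)"]) auto
  then have "u \<in> outside ?K" using outside_same_component w by blast
  then show False using u inside_Int_outside by blast
qed

lemma good_cong:
  assumes "good H w xs" "\<And>x y. x \<in> set xs \<Longrightarrow> y \<in> set xs \<Longrightarrow> H' x y = H x y"
  shows "good H' w xs"
  unfolding good_def
proof (intro allI impI)
  fix ys x zs assume d: "xs = ys @ x # zs"
  have "{y \<in> set ys. H' y x} = {y \<in> set ys. H y x}" using assms(2) d by auto
  then show "card {y \<in> set ys. H' y x} < w x" using assms(1) d unfolding good_def by auto
qed

lemma dp_cong:
  assumes "dp_F_coloring W L H f R" "\<And>x y. x \<in> R \<Longrightarrow> y \<in> R \<Longrightarrow> H' x y = H x y"
  shows "dp_F_coloring W L H' f R"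
proof -
  obtain xs where xs: "representative_set W L R" "distinct xs" "set xs = R"
    "good H (\<lambda>x. f (snd x) (fst x)) xs" using assms(1) unfolding dp_alt by blast
  have "good H' (\<lambda>x. f (snd x) (fst x)) xs" using good_cong[OF xs(4)] assms(2) xs(3) by blast
  then show ?thesis unfolding dp_alt using xs by blast
qed

lemma app_split:
  assumes "xs1 @ ws = ys @ x # zs"
  shows "(\<exists>zs'. xs1 = ys @ x # zs') \<or> (\<exists>us. ys = xs1 @ us \<and> ws = us @ x # zs)"
proof -
  obtain us where "xs1 = ys @ us \<and> us @ ws = x # zs \<or> xs1 @ us = ys \<and> ws = us @ x # zs"
    using assms append_eq_append_conv2[of xs1 ws ys "x # zs"] by blast
  then show ?thesis
  proof
    assume a: "xs1 = ys @ us \<and> us @ ws = x # zs"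
    show ?thesis
    proof (cases us)
      case Nil then show ?thesis using a by (intro disjI2 exI[of _ "[]"]) simp
    next
      case (Cons u us') then show ?thesis using a by (intro disjI1 exI[of _ us']) simp
    qed
  next
    assume "xs1 @ us = ys \<and> ws = us @ x # zs" then show ?thesis by blast
  qed
qed

lemma good_pos:
  assumes "good H w xs" "x \<in> set xs"
  shows "w x > 0"
proof -
  obtain ys zs where "xs = ys @ x # zs" using assms(2) by (meson split_list)
  then have "card {y \<in> set ys. H y x} < w x" using assms(1) unfolding good_def by blast
  then show ?thesis by simp
qed

lemma sum_one_two:
  assumes "finite A" "k \<in> A"
  shows "(\<Sum>i\<in>A. (if i = k then 1 else 2::nat)) + 1 = 2 * card A"
proof -
  have "(\<Sum>i\<in>A. (if i = k then 1 else 2::nat)) + (\<Sum>i\<in>A. (if i = k then 1 else 0::nat))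
      = (\<Sum>i\<in>A. (2::nat))" by (subst sum.distrib[symmetric]) (rule sum.cong, auto)
  moreover have "(\<Sum>i\<in>A. (if i = k then 1 else 0::nat)) = 1" using assms by (simp add: sum.delta)
  ultimately show ?thesis by simp
qed

lemma main_split:
  fixes V :: "complex set" and E :: "complex set set" and \<gamma> :: "complex set \<Rightarrow> real \<Rightarrow> complex"
    and C0 :: "complex list" and s :: nat and H :: "complex \<times> nat \<Rightarrow> complex \<times> nat \<Rightarrow> bool"
    and f :: "nat \<Rightarrow> complex \<Rightarrow> nat" and R0 :: "(complex \<times> nat) set"
    and C :: "complex list" and A B :: "complex set"
  assumes ce: "counterexample V E \<gamma> C0 s H f R0"
    and minimal: "\<And>V' E' \<gamma>' C0' s' H' f' R0'.
        counterexample V' E' \<gamma>' C0' s' H' f' R0' \<Longrightarrow> card V \<le> card V'"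
    and Ccyc: "is_cycle V E C" and Clen: "length C = 3"
    and AB: "A \<inter> B = {}" "A \<inter> set C = {}" "B \<inter> set C = {}" "V = set C \<union> A \<union> B" "A \<noteq> {}" "B \<noteq> {}"
    and C0A: "set C0 \<subseteq> set C \<union> A"
    and noAB: "\<And>u w. u \<in> A \<Longrightarrow> w \<in> B \<Longrightarrow> {u, w} \<notin> E"
  shows False
proof -
  define L where "L = (\<lambda>_::complex. {1..s})"
  have pg: "plane_graph V E \<gamma>" using ce by (simp add: counterexample_def)
  have no345: "no_adjacent_345 V E" using ce by (simp add: counterexample_def)
  have cyc0: "is_cycle V E C0" using ce by (simp add: counterexample_def)
  have len0: "length C0 = 3" using ce by (simp add: counterexample_def)
  have s1: "s \<ge> 1" using ce by (simp add: counterexample_def)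
  have cov: "is_cover V E L H" using ce by (simp add: counterexample_def L_def)
  have fv: "\<forall>v\<in>V. \<forall>i\<in>{1..s}. f i v \<in> {0, 1, 2}" using ce by (simp add: counterexample_def)
  have fs: "\<forall>v\<in>V. (\<Sum>i = 1..s. f i v) \<ge> 4" using ce by (simp add: counterexample_def)
  have R0c: "dp_F_coloring (set C0) L H f R0" using ce by (simp add: counterexample_def L_def)
  have nox: "\<not> (\<exists>R. dp_F_coloring V L H f R \<and> R0 \<subseteq> R)" using ce by (simp add: counterexample_def L_def)
  have finV: "finite V" using pg unfolding plane_graph_def by blast
  note cv = cov[unfolded is_cover_def]
  note cv1 = cv[THEN conjunct1] and cv2 = cv[THEN conjunct2, THEN conjunct1]
    and cv5 = cv[THEN conjunct2, THEN conjunct2, THEN conjunct2, THEN conjunct2]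
  have Hsig: "\<And>x y. H x y \<Longrightarrow> fst x \<in> V \<and> snd x \<in> {1..s} \<and> fst y \<in> V \<and> snd y \<in> {1..s}"
  proof -
    fix x y assume "H x y"
    then have "x \<in> Sigma V L" "y \<in> Sigma V L" using cv1 by blast+
    then show "fst x \<in> V \<and> snd x \<in> {1..s} \<and> fst y \<in> V \<and> snd y \<in> {1..s}"
      unfolding L_def by (cases x, cases y) auto
  qed
  have Hsym: "\<And>x y. H x y \<Longrightarrow> H y x" using cv2 by blast
  have Hnon: "\<And>u v c d. u \<in> V \<Longrightarrow> v \<in> V \<Longrightarrow> u \<noteq> v \<Longrightarrow> {u, v} \<notin> E \<Longrightarrow> \<not> H (u, c) (v, d)"
  proof
    fix u v c d assume a: "u \<in> V" "v \<in> V" "u \<noteq> v" "{u, v} \<notin> E" "H (u, c) (v, d)"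
    then have "c \<in> L u" "d \<in> L v" using Hsig[OF a(5)] unfolding L_def by auto
    then show False using cv5[rule_format, OF a(1,2,3)] a(4,5) by simp
  qed
  have Hmatch: "\<And>u v c d d'. u \<in> V \<Longrightarrow> v \<in> V \<Longrightarrow> u \<noteq> v \<Longrightarrow> {u, v} \<in> E \<Longrightarrow>
      H (u, c) (v, d) \<Longrightarrow> H (u, c) (v, d') \<Longrightarrow> d = d'"
  proof -
    fix u v c d d' assume a: "u \<in> V" "v \<in> V" "u \<noteq> v" "{u, v} \<in> E" "H (u, c) (v, d)" "H (u, c) (v, d')"
    then have "c \<in> L u" "d \<in> L v" "d' \<in> L v" using Hsig[OF a(5)] Hsig[OF a(6)] unfolding L_def by auto
    then show "d = d'" using cv5[rule_format, OF a(1,2,3)] a(4,5,6) by simp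
  qed
  have Hmatch2: "\<And>u v c c' d. u \<in> V \<Longrightarrow> v \<in> V \<Longrightarrow> u \<noteq> v \<Longrightarrow> {u, v} \<in> E \<Longrightarrow>
      H (u, c) (v, d) \<Longrightarrow> H (u, c') (v, d) \<Longrightarrow> c = c'"
  proof -
    fix u v c c' d assume a: "u \<in> V" "v \<in> V" "u \<noteq> v" "{u, v} \<in> E" "H (u, c) (v, d)" "H (u, c') (v, d)"
    then have "c \<in> L u" "c' \<in> L u" "d \<in> L v" using Hsig[OF a(5)] Hsig[OF a(6)] unfolding L_def by auto
    then show "c = c'" using cv5[rule_format, OF a(1,2,3)] a(4,5,6) by (simp, blast)
  qed
  have "\<exists>c1 c2 c3. C = [c1, c2, c3]" using Clen by (auto simp: numeral_3_eq_3 length_Suc_conv)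
  then obtain c1 c2 c3 where Ceq: "C = [c1, c2, c3]" by blast
  have cdist: "c1 \<noteq> c2" "c1 \<noteq> c3" "c2 \<noteq> c3" using Ccyc unfolding is_cycle_def Ceq by auto
  have setC: "set C = {c1, c2, c3}" using Ceq by simp
  have s2: "s \<ge> 2"
  proof -
    have c1V: "c1 \<in> V" using AB(4) setC by auto
    have "(\<Sum>i = 1..s. f i c1) \<le> (\<Sum>i = 1..s. (2::nat))"
    proof (intro sum_mono)
      fix i assume "i \<in> {1..s}"
      then have "f i c1 \<in> {0, 1, 2}" using fv c1V by blast
      then show "f i c1 \<le> 2" by auto
    qed
    then show ?thesis using fs c1V by auto
  qed

  define V1 where "V1 = set C \<union> A"
  define E1 where "E1 = {e \<in> E. e \<subseteq> V1}"
  define H1 where "H1 = (\<lambda>x y. H x y \<and> fst x \<in> V1 \<and> fst y \<in> V1)"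
  have V1V: "V1 \<subseteq> V" using AB unfolding V1_def by auto
  have card1: "card V1 < card V"
  proof (rule psubset_card_mono[OF finV])
    obtain b where "b \<in> B" using AB(6) by blast
    then show "V1 \<subset> V" using V1V AB unfolding V1_def by blast
  qed
  have "\<exists>R. dp_F_coloring V1 L H1 f R \<and> R0 \<subseteq> R"
  proof (rule ccontr)
    assume nR: "\<not> (\<exists>R. dp_F_coloring V1 L H1 f R \<and> R0 \<subseteq> R)"
    have p1: "plane_graph V1 E1 \<gamma>" unfolding E1_def using plane_sub[OF pg V1V] .
    have p2: "no_adjacent_345 V1 E1" unfolding E1_def using no345_sub[OF no345 V1V] .
    have p3: "is_cycle V1 E1 C0" unfolding E1_def using cycle_sub[OF cyc0] C0A unfolding V1_def by blast
    have p4: "is_cover V1 E1 L H1" unfolding E1_def H1_def using cover_sub[OF cov V1V] .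
    have p5: "\<forall>v\<in>V1. \<forall>i\<in>{1..s}. f i v \<in> {0, 1, 2}" using fv V1V by blast
    have p6: "\<forall>v\<in>V1. (\<Sum>i = 1..s. f i v) \<ge> 4" using fs V1V by blast
    have p7: "dp_F_coloring (set C0) L H1 f R0"
    proof (rule dp_cong[OF R0c])
      fix x y assume "x \<in> R0" "y \<in> R0"
      moreover have "R0 \<subseteq> Sigma (set C0) L" using R0c unfolding dp_F_coloring_def representative_set_def by blast
      ultimately have "fst x \<in> set C0" "fst y \<in> set C0" by (auto simp: mem_Times_iff)
      then show "H1 x y = H x y" unfolding H1_def V1_def using C0A by auto
    qed
    have "counterexample V1 E1 \<gamma> C0 s H1 f R0"
      unfolding counterexample_def using p1 p2 p3 len0 s1 p4[unfolded L_def] p5 p6 p7[unfolded L_def]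
        nR[unfolded L_def] by (intro conjI)
    then have "card V \<le> card V1" by (rule minimal)
    then show False using card1 by simp
  qed
  then obtain R1 where R1: "dp_F_coloring V1 L H1 f R1" "R0 \<subseteq> R1" by blast
  then obtain xs1 where xs1: "representative_set V1 L R1" "distinct xs1" "set xs1 = R1"
    "good H1 (\<lambda>x. f (snd x) (fst x)) xs1" unfolding dp_alt by blast
  have R1sig: "R1 \<subseteq> Sigma V1 L" and R1u: "\<forall>v\<in>V1. \<exists>!c. (v, c) \<in> R1"
    using xs1(1) unfolding representative_set_def by blast+
  define k where "k = (\<lambda>v. THE c. (v, c) \<in> R1)"
  have kR: "\<And>v. v \<in> V1 \<Longrightarrow> (v, k v) \<in> R1"
  proof -
    fix v assume "v \<in> V1"
    from theI'[OF R1u[rule_format, OF this]] show "(v, k v) \<in> R1" unfolding k_def .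
  qed
  have kU: "\<And>v c. (v, c) \<in> R1 \<Longrightarrow> c = k v"
  proof -
    fix v c assume a: "(v, c) \<in> R1"
    then have "v \<in> V1" using R1sig by blast
    from the1_equality[OF R1u[rule_format, OF this] a] show "c = k v" unfolding k_def by simp
  qed
  have kL: "\<And>v. v \<in> V1 \<Longrightarrow> k v \<in> {1..s}"
  proof -
    fix v assume "v \<in> V1"
    then have "(v, k v) \<in> Sigma V1 L" using kR R1sig by blast
    then show "k v \<in> {1..s}" unfolding L_def by simp
  qed
  define p1 where "p1 = (c1, k c1)"
  define p2 where "p2 = (c2, k c2)"
  define p3 where "p3 = (c3, k c3)"
  have cV1: "c1 \<in> V1" "c2 \<in> V1" "c3 \<in> V1" unfolding V1_def setC by auto
  have pR1: "p1 \<in> R1" "p2 \<in> R1" "p3 \<in> R1" unfolding p1_def p2_def p3_def using kR cV1 by auto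
  have R1C: "\<And>y. y \<in> R1 \<Longrightarrow> fst y \<in> set C \<Longrightarrow> y \<in> {p1, p2, p3}"
  proof -
    fix y assume "y \<in> R1" "fst y \<in> set C"
    then show "y \<in> {p1, p2, p3}" unfolding p1_def p2_def p3_def setC using kU
      by (cases y) auto
  qed

  define V2 where "V2 = set C \<union> B"
  define E2 where "E2 = {e \<in> E. e \<subseteq> V2}"
  define L2 where "L2 = (\<lambda>_::complex. {1..s+1})"
  define P where "P = {(p1, p2), (p2, p1), (p2, p3), (p3, p2)}"
  define H2 where "H2 = (\<lambda>x y. x \<in> Sigma V2 L2 \<and> y \<in> Sigma V2 L2 \<and>
      (if fst x = fst y then snd x \<noteq> snd y else if fst x \<in> set C \<and> fst y \<in> set C then (x, y) \<in> P else H x y))"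
  define f2 where "f2 = (\<lambda>i v. if v \<in> set C then (if v = c1 \<and> i = k c1 then 1 else 2)
      else if i = s + 1 then 0 else f i v)"
  define R0' where "R0' = {p1, p2, p3}"
  have V2V: "V2 \<subseteq> V" using AB unfolding V2_def by auto
  have card2: "card V2 < card V"
  proof (rule psubset_card_mono[OF finV])
    obtain a where "a \<in> A" using AB(5) by blast
    then show "V2 \<subset> V" using V2V AB unfolding V2_def by blast
  qed
  have pSig: "p1 \<in> Sigma V2 L2" "p2 \<in> Sigma V2 L2" "p3 \<in> Sigma V2 L2"
    unfolding p1_def p2_def p3_def V2_def L2_def setC using kL[OF cV1(1)] kL[OF cV1(2)] kL[OF cV1(3)] by auto
  have H2p: "H2 p1 p2" "H2 p2 p1" "H2 p2 p3" "H2 p3 p2"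
    unfolding H2_def P_def using pSig cdist unfolding p1_def p2_def p3_def setC by auto
  have H2p13: "\<not> H2 p1 p3"
    unfolding H2_def P_def using cdist unfolding p1_def p2_def p3_def setC by auto
  have "\<exists>R. dp_F_coloring V2 L2 H2 f2 R \<and> R0' \<subseteq> R"
  proof (rule ccontr)
    assume nR: "\<not> (\<exists>R. dp_F_coloring V2 L2 H2 f2 R \<and> R0' \<subseteq> R)"
    have q1: "plane_graph V2 E2 \<gamma>" unfolding E2_def using plane_sub[OF pg V2V] .
    have q2: "no_adjacent_345 V2 E2" unfolding E2_def using no345_sub[OF no345 V2V] .
    have q3: "is_cycle V2 E2 C" unfolding E2_def using cycle_sub[OF Ccyc] unfolding V2_def by blast
    have q4: "is_cover V2 E2 L2 H2"
      unfolding is_cover_def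
    proof (intro conjI)
      show "\<forall>x y. H2 x y \<longrightarrow> x \<in> Sigma V2 L2 \<and> y \<in> Sigma V2 L2" unfolding H2_def by blast
    next
      show "\<forall>x y. H2 x y \<longrightarrow> H2 y x"
      proof (intro allI impI)
        fix x y assume h: "H2 x y"
        show "H2 y x"
        proof (cases "fst x = fst y")
          case True then show ?thesis using h unfolding H2_def by auto
        next
          case ne: False
          show ?thesis
          proof (cases "fst x \<in> set C \<and> fst y \<in> set C")
            case True
            then have "(x, y) \<in> P" using h ne unfolding H2_def by simp
            then have "(y, x) \<in> P" unfolding P_def by auto
            then show ?thesis using h ne True unfolding H2_def by auto
          next
            case False
            then have "H x y" using h ne unfolding H2_def by simp
            then have "H y x" using Hsym by blast
            then show ?thesis using h ne False unfolding H2_def by auto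
          qed
        qed
      qed
    next
      show "\<forall>x. \<not> H2 x x" unfolding H2_def by simp
    next
      show "\<forall>u\<in>V2. \<forall>c\<in>L2 u. \<forall>c'\<in>L2 u. c \<noteq> c' \<longrightarrow> H2 (u, c) (u, c')" unfolding H2_def by simp
    next
      show "\<forall>u\<in>V2. \<forall>v\<in>V2. u \<noteq> v \<longrightarrow>
        (if {u, v} \<in> E2 then
           (\<forall>c\<in>L2 u. \<forall>d\<in>L2 v. \<forall>d'\<in>L2 v. H2 (u, c) (v, d) \<and> H2 (u, c) (v, d') \<longrightarrow> d = d') \<and>
           (\<forall>c\<in>L2 u. \<forall>c'\<in>L2 u. \<forall>d\<in>L2 v. H2 (u, c) (v, d) \<and> H2 (u, c') (v, d) \<longrightarrow> c = c')
         else (\<forall>c\<in>L2 u. \<forall>d\<in>L2 v. \<not> H2 (u, c) (v, d)))"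
      proof (intro ballI impI)
        fix u v assume u: "u \<in> V2" and v: "v \<in> V2" and uv: "u \<noteq> v"
        have uV: "u \<in> V" and vV: "v \<in> V" using u v V2V by auto
        have eqE: "({u, v} \<in> E2) = ({u, v} \<in> E)" using u v unfolding E2_def by auto
        have Pfun: "\<And>a b b'. (a, b) \<in> P \<Longrightarrow> (a, b') \<in> P \<Longrightarrow> fst b = fst b' \<Longrightarrow> b = b'"
        proof -
          fix a b b' assume "(a, b) \<in> P" "(a, b') \<in> P" "fst b = fst b'"
          moreover have "b \<in> {p1, p2, p3}" "b' \<in> {p1, p2, p3}" using calculation unfolding P_def by auto
          ultimately show "b = b'" unfolding p1_def p2_def p3_def using cdist by auto
        qed
        have Pfun2: "\<And>a a' b. (a, b) \<in> P \<Longrightarrow> (a', b) \<in> P \<Longrightarrow> fst a = fst a' \<Longrightarrow> a = a'"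
        proof -
          fix a a' b assume "(a, b) \<in> P" "(a', b) \<in> P" "fst a = fst a'"
          moreover have "a \<in> {p1, p2, p3}" "a' \<in> {p1, p2, p3}" using calculation unfolding P_def by auto
          ultimately show "a = a'" unfolding p1_def p2_def p3_def using cdist by auto
        qed
        show "if {u, v} \<in> E2 then
           (\<forall>c\<in>L2 u. \<forall>d\<in>L2 v. \<forall>d'\<in>L2 v. H2 (u, c) (v, d) \<and> H2 (u, c) (v, d') \<longrightarrow> d = d') \<and>
           (\<forall>c\<in>L2 u. \<forall>c'\<in>L2 u. \<forall>d\<in>L2 v. H2 (u, c) (v, d) \<and> H2 (u, c') (v, d) \<longrightarrow> c = c')
         else (\<forall>c\<in>L2 u. \<forall>d\<in>L2 v. \<not> H2 (u, c) (v, d))"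
        proof (cases "{u, v} \<in> E")
          case True
          have M1: "\<forall>c\<in>L2 u. \<forall>d\<in>L2 v. \<forall>d'\<in>L2 v. H2 (u, c) (v, d) \<and> H2 (u, c) (v, d') \<longrightarrow> d = d'"
          proof (intro ballI impI)
            fix c d d' assume h: "H2 (u, c) (v, d) \<and> H2 (u, c) (v, d')"
            show "d = d'"
            proof (cases "u \<in> set C \<and> v \<in> set C")
              case bc: True
              then have "((u, c), (v, d)) \<in> P" "((u, c), (v, d')) \<in> P" using h uv unfolding H2_def by auto
              then have "(v, d) = (v, d')" using Pfun[of "(u, c)" "(v, d)" "(v, d')"] by simp
              then show ?thesis by simp
            next
              case bc: False
              then have "H (u, c) (v, d)" "H (u, c) (v, d')" using h uv unfolding H2_def by auto
              then show ?thesis using Hmatch[OF uV vV uv True] by blast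
            qed
          qed
          have M2: "\<forall>c\<in>L2 u. \<forall>c'\<in>L2 u. \<forall>d\<in>L2 v. H2 (u, c) (v, d) \<and> H2 (u, c') (v, d) \<longrightarrow> c = c'"
          proof (intro ballI impI)
            fix c c' d assume h: "H2 (u, c) (v, d) \<and> H2 (u, c') (v, d)"
            show "c = c'"
            proof (cases "u \<in> set C \<and> v \<in> set C")
              case bc: True
              then have "((u, c), (v, d)) \<in> P" "((u, c'), (v, d)) \<in> P" using h uv unfolding H2_def by auto
              then have "(u, c) = (u, c')" using Pfun2[of "(u, c)" "(v, d)" "(u, c')"] by simp
              then show ?thesis by simp
            next
              case bc: False
              then have "H (u, c) (v, d)" "H (u, c') (v, d)" using h uv unfolding H2_def by auto
              then show ?thesis using Hmatch2[OF uV vV uv True] by blast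
            qed
          qed
          show ?thesis using True eqE M1 M2 by simp
        next
          case False
          have N: "\<forall>c\<in>L2 u. \<forall>d\<in>L2 v. \<not> H2 (u, c) (v, d)"
          proof (intro ballI notI)
            fix c d assume h: "H2 (u, c) (v, d)"
            show False
            proof (cases "u \<in> set C \<and> v \<in> set C")
              case True
              then have "{u, v} \<in> E" using tri_adj[OF Ccyc Clen] uv by blast
              then show False using False by simp
            next
              case bc: False
              then have "H (u, c) (v, d)" using h uv unfolding H2_def by auto
              then show False using Hnon[OF uV vV uv False] by blast
            qed
          qed
          show ?thesis using False eqE N by simp
        qed
      qed
    qed
    have q5: "\<forall>v\<in>V2. \<forall>i\<in>{1..s+1}. f2 i v \<in> {0, 1, 2}"
    proof (intro ballI)
      fix v i assume v: "v \<in> V2" and i: "i \<in> {1..s+1}"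
      show "f2 i v \<in> {0, 1, 2}"
      proof (cases "v \<in> set C")
        case True then show ?thesis unfolding f2_def by simp
      next
        case False
        show ?thesis
        proof (cases "i = s + 1")
          case True then show ?thesis using False unfolding f2_def by simp
        next
          case ni: False
          then have "i \<in> {1..s}" using i by auto
          moreover have "v \<in> V" using v V2V by blast
          ultimately have "f i v \<in> {0, 1, 2}" using fv by blast
          then show ?thesis using False ni unfolding f2_def by simp
        qed
      qed
    qed
    have q6: "\<forall>v\<in>V2. (\<Sum>i = 1..s+1. f2 i v) \<ge> 4"
    proof
      fix v assume v: "v \<in> V2"
      show "(\<Sum>i = 1..s+1. f2 i v) \<ge> 4"
      proof (cases "v \<in> set C")
        case vC: True
        show ?thesis
        proof (cases "v = c1")
          case True
          have "(\<Sum>i = 1..s+1. f2 i v) = (\<Sum>i = 1..s+1. (if i = k c1 then 1 else 2::nat))"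
            using vC True unfolding f2_def by (intro sum.cong) auto
          moreover have "k c1 \<in> {1..s+1}" using kL[OF cV1(1)] by auto
          ultimately have "(\<Sum>i = 1..s+1. f2 i v) + 1 = 2 * card {1..s+1}"
            using sum_one_two[of "{1..s+1}" "k c1"] by simp
          then show ?thesis using s2 by simp
        next
          case False
          have "(\<Sum>i = 1..s+1. f2 i v) = (\<Sum>i = 1..s+1. (2::nat))"
            using vC False unfolding f2_def by (intro sum.cong) auto
          then show ?thesis using s1 by simp
        qed
      next
        case vC: False
        have vV: "v \<in> V" using v V2V by blast
        have "(\<Sum>i = 1..s+1. f2 i v) = (\<Sum>i = 1..s. f2 i v) + f2 (s+1) v" by simp
        also have "f2 (s+1) v = 0" using vC unfolding f2_def by simp
        also have "(\<Sum>i = 1..s. f2 i v) = (\<Sum>i = 1..s. f i v)"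
          using vC unfolding f2_def by (intro sum.cong) auto
        finally show ?thesis using fs vV by simp
      qed
    qed
    have q7: "dp_F_coloring (set C) L2 H2 f2 R0'"
      unfolding dp_F_coloring_def
    proof (intro conjI exI[of _ "[p1, p2, p3]"])
      show "representative_set (set C) L2 R0'"
        unfolding representative_set_def R0'_def
      proof (intro conjI ballI)
        show "{p1, p2, p3} \<subseteq> Sigma (set C) L2" using pSig unfolding setC p1_def p2_def p3_def by auto
      next
        fix v assume "v \<in> set C"
        then show "\<exists>!c. (v, c) \<in> {p1, p2, p3}" unfolding setC p1_def p2_def p3_def using cdist by auto
      qed
    next
      show "distinct [p1, p2, p3]" unfolding p1_def p2_def p3_def using cdist by auto
    next
      show "set [p1, p2, p3] = R0'" unfolding R0'_def by simp
    next
      show "\<forall>j<length [p1, p2, p3]. card {i. i < j \<and> H2 ([p1, p2, p3] ! i) ([p1, p2, p3] ! j)}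
          < f2 (snd ([p1, p2, p3] ! j)) (fst ([p1, p2, p3] ! j))"
      proof (intro allI impI)
        fix j assume "j < length [p1, p2, p3]"
        then have "j = 0 \<or> j = 1 \<or> j = 2" by auto
        moreover have "card {i. i < 0 \<and> H2 ([p1, p2, p3] ! i) ([p1, p2, p3] ! 0)}
          < f2 (snd ([p1, p2, p3] ! 0)) (fst ([p1, p2, p3] ! 0))"
          unfolding p1_def f2_def setC by simp
        moreover have "card {i. i < 1 \<and> H2 ([p1, p2, p3] ! i) ([p1, p2, p3] ! 1)}
          < f2 (snd ([p1, p2, p3] ! 1)) (fst ([p1, p2, p3] ! 1))"
        proof -
          have "{i::nat. i < 1 \<and> H2 ([p1, p2, p3] ! i) ([p1, p2, p3] ! 1)} = {0}" using H2p by auto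
          moreover have "f2 (snd p2) (fst p2) = 2" unfolding p2_def f2_def setC using cdist by simp
          ultimately show ?thesis by simp
        qed
        moreover have "card {i. i < 2 \<and> H2 ([p1, p2, p3] ! i) ([p1, p2, p3] ! 2)}
          < f2 (snd ([p1, p2, p3] ! 2)) (fst ([p1, p2, p3] ! 2))"
        proof -
          have "{i::nat. i < 2 \<and> H2 ([p1, p2, p3] ! i) ([p1, p2, p3] ! 2)} = {1}"
          proof (intro equalityI subsetI)
            fix i assume "i \<in> {i::nat. i < 2 \<and> H2 ([p1, p2, p3] ! i) ([p1, p2, p3] ! 2)}"
            then have "i = 0 \<or> i = 1" "H2 ([p1, p2, p3] ! i) p3" by auto
            then show "i \<in> {1}" using H2p13 by auto
          next
            fix i assume "i \<in> ({1}::nat set)"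
            then show "i \<in> {i::nat. i < 2 \<and> H2 ([p1, p2, p3] ! i) ([p1, p2, p3] ! 2)}" using H2p by simp
          qed
          moreover have "f2 (snd p3) (fst p3) = 2" unfolding p3_def f2_def setC using cdist by simp
          ultimately show ?thesis by simp
        qed
        ultimately show "card {i. i < j \<and> H2 ([p1, p2, p3] ! i) ([p1, p2, p3] ! j)}
          < f2 (snd ([p1, p2, p3] ! j)) (fst ([p1, p2, p3] ! j))" by auto
      qed
    qed
    have "counterexample V2 E2 \<gamma> C (s+1) H2 f2 R0'"
    proof -
      have s1': "s + 1 \<ge> 1" by simp
      show ?thesis unfolding counterexample_def using q1 q2 q3 Clen s1' q4[unfolded L2_def] q5 q6 q7[unfolded L2_def]
        nR[unfolded L2_def] by (intro conjI)
    qed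
    then have "card V \<le> card V2" by (rule minimal)
    then show False using card2 by simp
  qed
  then obtain R2 where R2: "dp_F_coloring V2 L2 H2 f2 R2" "R0' \<subseteq> R2" by blast
  then obtain xs2 where xs2: "representative_set V2 L2 R2" "distinct xs2" "set xs2 = R2"
    "good H2 (\<lambda>x. f2 (snd x) (fst x)) xs2" unfolding dp_alt by blast
  have R2sig: "R2 \<subseteq> Sigma V2 L2" and R2u: "\<forall>v\<in>V2. \<exists>!c. (v, c) \<in> R2"
    using xs2(1) unfolding representative_set_def by blast+
  have BV1: "B \<inter> V1 = {}" using AB unfolding V1_def by blast
  have BC: "\<And>x. x \<in> B \<Longrightarrow> x \<notin> set C" using AB(3) by blast
  have R1V1: "\<And>x. x \<in> R1 \<Longrightarrow> fst x \<in> V1 \<and> snd x \<in> {1..s}"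
    using R1sig unfolding L_def by (auto simp: mem_Times_iff)
  have R2B: "\<And>x. x \<in> R2 \<Longrightarrow> fst x \<in> B \<Longrightarrow> snd x \<in> {1..s} \<and> f2 (snd x) (fst x) = f (snd x) (fst x)"
  proof -
    fix x assume x: "x \<in> R2" "fst x \<in> B"
    have pos: "f2 (snd x) (fst x) > 0" using good_pos[OF xs2(4)] x(1) xs2(3) by blast
    have nC: "fst x \<notin> set C" using BC x(2) by blast
    have "snd x \<in> {1..s+1}" using x(1) R2sig unfolding L2_def by (auto simp: mem_Times_iff)
    moreover have "snd x \<noteq> s + 1" using pos nC unfolding f2_def by auto
    ultimately show "snd x \<in> {1..s} \<and> f2 (snd x) (fst x) = f (snd x) (fst x)"
      using nC unfolding f2_def by auto
  qed
  define Pb where "Pb = (\<lambda>x::complex \<times> nat. fst x \<in> B)"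
  define R where "R = R1 \<union> {x \<in> R2. fst x \<in> B}"
  define xs where "xs = xs1 @ filter Pb xs2"
  have setxs: "set xs = R" unfolding xs_def R_def Pb_def using xs1(3) xs2(3) by auto
  have distxs: "distinct xs"
  proof -
    have "set xs1 \<inter> set (filter Pb xs2) = {}"
      using R1V1 BV1 xs1(3) unfolding Pb_def by auto
    then show ?thesis unfolding xs_def using xs1(2) xs2(2) by simp
  qed
  have repR: "representative_set V L R"
    unfolding representative_set_def
  proof (intro conjI ballI)
    show "R \<subseteq> Sigma V L"
    proof
      fix x assume "x \<in> R"
      then consider "x \<in> R1" | "x \<in> R2" "fst x \<in> B" unfolding R_def by blast
      then show "x \<in> Sigma V L"
      proof cases
        case 1 then show ?thesis using R1V1 V1V unfolding L_def by (cases x) auto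
      next
        case 2 then show ?thesis using R2B AB(4) unfolding L_def by (cases x) auto
      qed
    qed
  next
    fix v assume v: "v \<in> V"
    show "\<exists>!c. (v, c) \<in> R"
    proof (cases "v \<in> V1")
      case True
      then have "v \<notin> B" using BV1 by blast
      then have "\<And>c. (v, c) \<in> R \<longleftrightarrow> (v, c) \<in> R1" unfolding R_def by auto
      then show ?thesis using R1u True by simp
    next
      case False
      then have vB: "v \<in> B" using v AB(4) unfolding V1_def by blast
      then have vV2: "v \<in> V2" unfolding V2_def by blast
      have "\<And>c. (v, c) \<in> R \<longleftrightarrow> (v, c) \<in> R2" unfolding R_def using False R1V1 vB by force
      then show ?thesis using R2u vV2 by simp
    qed
  qed
  have goodxs: "good H (\<lambda>x. f (snd x) (fst x)) xs"
    unfolding good_def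
  proof (intro allI impI)
    fix ys x zs assume d: "xs = ys @ x # zs"
    then have d': "xs1 @ filter Pb xs2 = ys @ x # zs" unfolding xs_def .
    show "card {y \<in> set ys. H y x} < f (snd x) (fst x)"
    proof (cases "\<exists>zs'. xs1 = ys @ x # zs'")
      case True
      then obtain zs' where d1: "xs1 = ys @ x # zs'" by blast
      have "x \<in> R1" using xs1(3) d1 by auto
      then have xV1: "fst x \<in> V1" using R1V1 by blast
      have "\<And>y. y \<in> set ys \<Longrightarrow> y \<in> R1" using xs1(3) d1 by auto
      then have "\<And>y. y \<in> set ys \<Longrightarrow> fst y \<in> V1" using R1V1 by blast
      then have "{y \<in> set ys. H y x} = {y \<in> set ys. H1 y x}"
        using xV1 unfolding H1_def by auto
      moreover have "card {y \<in> set ys. H1 y x} < f (snd x) (fst x)"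
        using xs1(4) d1 unfolding good_def by blast
      ultimately show ?thesis by simp
    next
      case False
      then obtain us where us: "ys = xs1 @ us" "filter Pb xs2 = us @ x # zs"
        using app_split[OF d'] by blast
      obtain ys2 zs2 where d2: "xs2 = ys2 @ x # zs2" "filter Pb ys2 = us"
        using filter_split[OF us(2)] by blast
      have xF: "x \<in> set (filter Pb xs2)" using us(2) by simp
      then have xR2: "x \<in> R2" and xB: "fst x \<in> B" using xs2(3) unfolding Pb_def by auto
      have xnC: "fst x \<notin> set C" using BC xB by blast
      have xSig: "x \<in> Sigma V2 L2" using xR2 R2sig by blast
      have wx: "f2 (snd x) (fst x) = f (snd x) (fst x)" using R2B xR2 xB by blast
      have cnt: "card {y \<in> set ys2. H2 y x} < f2 (snd x) (fst x)"
        using xs2(4) d2(1) unfolding good_def by blast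
      have sub: "{y \<in> set ys. H y x} \<subseteq> {y \<in> set ys2. H2 y x}"
      proof
        fix y assume y: "y \<in> {y \<in> set ys. H y x}"
        then have Hyx: "H y x" and Hxy: "H x y" using Hsym by auto
        from y consider "y \<in> set xs1" | "y \<in> set us" using us(1) by auto
        then show "y \<in> {y \<in> set ys2. H2 y x}"
        proof cases
          case 1
          then have yR1: "y \<in> R1" using xs1(3) by simp
          have yV1: "fst y \<in> V1" using R1V1 yR1 by blast
          have ne: "fst y \<noteq> fst x"
          proof
            assume "fst y = fst x"
            then have "fst x \<in> B \<inter> V1" using yV1 xB by simp
            then show False using BV1 by simp
          qed
          have "fst y \<in> set C"
          proof (rule ccontr)
            assume "fst y \<notin> set C"
            then have yA: "fst y \<in> A" using yV1 unfolding V1_def by blast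
            have "{fst y, fst x} \<notin> E" using noAB[OF yA xB] .
            moreover have "fst y \<in> V" using yV1 V1V by blast
            moreover have "fst x \<in> V" using xB AB(4) by blast
            ultimately have "\<not> H (fst y, snd y) (fst x, snd x)" using Hnon[of "fst y" "fst x" "snd y" "snd x"] ne by blast
            then show False using Hyx by simp
          qed
          then have yP: "y \<in> {p1, p2, p3}" using R1C yR1 by blast
          have ySig: "y \<in> Sigma V2 L2" using yP pSig by blast
          have H2yx: "H2 y x" unfolding H2_def using ySig xSig ne xnC Hyx by auto
          have H2xy: "H2 x y" unfolding H2_def using ySig xSig ne xnC Hxy by auto
          have mem: "p1 \<in> set xs2" "p2 \<in> set xs2" "p3 \<in> set xs2" "x \<in> set xs2"
            using R2(2) xs2(3) xR2 unfolding R0'_def by auto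
          have pne: "p1 \<noteq> p2" "p1 \<noteq> p3" "p2 \<noteq> p3" unfolding p1_def p2_def p3_def using cdist by auto
          have xne: "x \<noteq> p1" "x \<noteq> p2" "x \<noteq> p3" using xnC unfolding p1_def p2_def p3_def setC by auto
          have wp: "f2 (snd p1) (fst p1) \<le> 1" "f2 (snd p2) (fst p2) \<le> 2" "f2 (snd p3) (fst p3) \<le> 2"
            unfolding p1_def p2_def p3_def f2_def setC by auto
          have "y \<in> set ys2"
            using force[OF xs2(2) xs2(4) mem pne xne H2p(1) H2p(3) H2p(2) H2p(4) wp yP H2xy d2(1)] .
          then show ?thesis using H2yx by simp
        next
          case 2
          then have yys2: "y \<in> set ys2" using d2(2) by auto
          then have yR2: "y \<in> R2" using d2(1) xs2(3) by auto
          have "y \<noteq> x" using xs2(2) d2(1) yys2 by auto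
          have ne: "fst y \<noteq> fst x"
          proof
            assume eq: "fst y = fst x"
            have "fst x \<in> V2" using xB unfolding V2_def by blast
            then have "snd y = snd x" using R2u yR2 xR2 eq
              by (metis prod.collapse)
            then show False using eq \<open>y \<noteq> x\<close> by (simp add: prod_eq_iff)
          qed
          have ySig: "y \<in> Sigma V2 L2" using yR2 R2sig by blast
          have "H2 y x" unfolding H2_def using ySig xSig ne xnC Hyx by auto
          then show ?thesis using yys2 by simp
        qed
      qed
      have "card {y \<in> set ys. H y x} \<le> card {y \<in> set ys2. H2 y x}"
        by (rule card_mono[OF _ sub]) simp
      then show ?thesis using cnt wx by simp
    qed
  qed
  have "dp_F_coloring V L H f R" unfolding dp_alt using repR distxs setxs goodxs by blast
  moreover have "R0 \<subseteq> R" using R1(2) unfolding R_def by blast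
  ultimately show False using nox by blast
qed


theorem lemma6:
  fixes V :: "complex set" and E :: "complex set set" and \<gamma> :: "complex set \<Rightarrow> real \<Rightarrow> complex"
    and C0 :: "complex list" and s :: nat and H :: "complex \<times> nat \<Rightarrow> complex \<times> nat \<Rightarrow> bool"
    and f :: "nat \<Rightarrow> complex \<Rightarrow> nat" and R0 :: "(complex \<times> nat) set"
  assumes ce: "counterexample V E \<gamma> C0 s H f R0"
    and minimal: "\<And>V' E' \<gamma>' C0' s' H' f' R0'.
        counterexample V' E' \<gamma>' C0' s' H' f' R0' \<Longrightarrow> card V \<le> card V'"
  shows "\<not> (\<exists>C. is_cycle V E C \<and> length C = 3 \<and> separating_cycle V \<gamma> C)"
proof
  assume "\<exists>C. is_cycle V E C \<and> length C = 3 \<and> separating_cycle V \<gamma> C"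
  then obtain C where Ccyc: "is_cycle V E C" and Clen: "length C = 3" and sep: "separating_cycle V \<gamma> C"
    by blast
  have pg: "plane_graph V E \<gamma>" using ce by (simp add: counterexample_def)
  have cyc0: "is_cycle V E C0" using ce by (simp add: counterexample_def)
  have len0: "length C0 = 3" using ce by (simp add: counterexample_def)
  define K where "K = cycle_curve \<gamma> C"
  define I where "I = V \<inter> inside K"
  define Ou where "Ou = V \<inter> outside K"
  have CV: "set C \<subseteq> V" using Ccyc unfolding is_cycle_def by blast
  have C0V: "set C0 \<subseteq> V" using cyc0 unfolding is_cycle_def by blast
  have CK: "\<And>v. v \<in> set C \<Longrightarrow> v \<in> K" unfolding K_def using curve_vertices[OF pg Ccyc] CV by blast
  have IO: "I \<inter> Ou = {}" unfolding I_def Ou_def using inside_Int_outside[of K] by blast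
  have IC: "I \<inter> set C = {}" unfolding I_def using CK inside_Un_outside[of K] by blast
  have OuC: "Ou \<inter> set C = {}" unfolding Ou_def using CK inside_Un_outside[of K] by blast
  have Veq: "V = set C \<union> I \<union> Ou"
  proof
    show "V \<subseteq> set C \<union> I \<union> Ou"
    proof
      fix v assume v: "v \<in> V"
      show "v \<in> set C \<union> I \<union> Ou"
      proof (cases "v \<in> set C")
        case False
        then have "v \<notin> K" unfolding K_def using curve_vertices[OF pg Ccyc v] by blast
        then have "v \<in> inside K \<union> outside K" using inside_Un_outside[of K] by blast
        then show ?thesis unfolding I_def Ou_def using v by blast
      qed simp
    qed
  next
    show "set C \<union> I \<union> Ou \<subseteq> V" using CV unfolding I_def Ou_def by blast
  qed
  have Ine: "I \<noteq> {}" and Oune: "Ou \<noteq> {}" using sep unfolding separating_cycle_def I_def Ou_def K_def by auto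
  have noIOu: "\<And>u w. u \<in> I \<Longrightarrow> w \<in> Ou \<Longrightarrow> {u, w} \<notin> E"
  proof
    fix u w assume "u \<in> I" "w \<in> Ou" "{u, w} \<in> E"
    then show False using no_cross[OF pg Ccyc, of u w] unfolding I_def Ou_def K_def by blast
  qed
  have noOuI: "\<And>u w. u \<in> Ou \<Longrightarrow> w \<in> I \<Longrightarrow> {u, w} \<notin> E"
    using noIOu by (metis insert_commute)
  have "set C0 \<subseteq> set C \<union> I \<or> set C0 \<subseteq> set C \<union> Ou"
  proof (rule ccontr)
    assume "\<not> (set C0 \<subseteq> set C \<union> I \<or> set C0 \<subseteq> set C \<union> Ou)"
    then obtain u w where u: "u \<in> set C0" "u \<notin> set C \<union> I" and w: "w \<in> set C0" "w \<notin> set C \<union> Ou"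
      by blast
    have uO: "u \<in> Ou" using u C0V Veq by blast
    have wI: "w \<in> I" using w C0V Veq by blast
    have "u \<noteq> w" using uO wI IO by blast
    then have "{w, u} \<in> E" using tri_adj[OF cyc0 len0 w(1) u(1)] by blast
    then show False using noIOu[OF wI uO] by blast
  qed
  then show False
  proof
    assume a: "set C0 \<subseteq> set C \<union> I"
    show False
      by (rule main_split[of V E \<gamma> C0 s H f R0 C I Ou, OF ce minimal Ccyc Clen IO IC OuC Veq Ine Oune a noIOu])
  next
    assume a: "set C0 \<subseteq> set C \<union> Ou"
    have b: "Ou \<inter> I = {}" using IO by blast
    have c: "V = set C \<union> Ou \<union> I" using Veq by blast
    show False
      by (rule main_split[of V E \<gamma> C0 s H f R0 C Ou I, OF ce minimal Ccyc Clen b OuC IC c Oune Ine a noOuI])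
  qed
qed

end
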